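(* Let $n\ge3$, suppose the generator is $\pi_{\mathrm{gen}}=\pi_{\mathrm{target}}$, and assume rewards lie in $[0,R]$. In the infinite-block-length setting, the sequential Monte Carlo policies satisfy $$\mathbb{E}_{N\sim\mathrm{Poi}(n)|_{>0}}[D_{\mathrm{KL}}(\hat\pi_N\|\pi^\star_\beta)]\le\widetilde{\mathcal{O}}_n\!\left(\frac{e^{2\beta R}}{n^2}\right),$$ and for every fixed $n\ge3$, $$D_{\mathrm{KL}}(\hat\pi_n\|\pi^\star_\beta)\le\widetilde{\mathcal{O}}_n\!\left(\frac{e^{2\beta R}}{n^{3/2}}\right).$$
   Context: Prompts $x$ drawn from $\rho$; $\pi_{\mathrm{target}}$ is a (full-support) conditional distribution over full responses, $r(y|x)\in[0,R]$, $\beta>0$, $\pi^\star_\beta(y|x)\propto\pi_{\mathrm{target}}(y|x)e^{\beta r(y|x)}$. With $\phi_\beta(y|x)=\frac{\pi_{\mathrm{target}}(y|x)}{\pi_{\mathrm{gen}}(y|x)}e^{\beta r(y|x)}$, sequential Monte Carlo with $N$ particles draws $Y_1,\dots,Y_N$ i.i.d. from $\pi_{\mathrm{gen}}(\cdot|x)$ and outputs $Y_i$ with probability $\phi_\beta(Y_i|x)/\sum_j\phi_\beta(Y_j|x)$; $\hat\pi_N$ is its output distribution. $\mathrm{Poi}(n)|_{>0}$ is Poisson with mean $n$ conditioned on being positive. $D_{\mathrm{KL}}(\pi_1\|\pi_2)=\mathbb{E}_{x\sim\rho}D_{\mathrm{KL}}(\pi_1(\cdot|x)\|\pi_2(\cdot|x))$.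 $\widetilde{\mathcal{O}}_n$ hides constants and polylog factors in $n$. *)

theory Defs
  imports "HOL-Probability.Probability"
begin

definition smc_weight ::
  "('x \<Rightarrow> 'y pmf) \<Rightarrow> ('x \<Rightarrow> 'y pmf) \<Rightarrow> ('x \<Rightarrow> 'y \<Rightarrow> real) \<Rightarrow> real \<Rightarrow> 'x \<Rightarrow> 'y \<Rightarrow> real" where
  "smc_weight gen target r \<beta> x y = pmf (target x) y / pmf (gen x) y * exp (\<beta> * r x y)"

definition smc_pmf ::
  "('x \<Rightarrow> 'y pmf) \<Rightarrow> ('x \<Rightarrow> 'y pmf) \<Rightarrow> ('x \<Rightarrow> 'y \<Rightarrow> real) \<Rightarrow> real \<Rightarrow> nat \<Rightarrow> 'x \<Rightarrow> 'y pmf" where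
  "smc_pmf gen target r \<beta> N x =
     bind_pmf (replicate_pmf N (gen x))
       (\<lambda>ys. pmf_of_list
               (map (\<lambda>y. (y, smc_weight gen target r \<beta> x y /
                              sum_list (map (smc_weight gen target r \<beta> x) ys))) ys))"

definition tilted_pmf ::
  "('x \<Rightarrow> 'y pmf) \<Rightarrow> ('x \<Rightarrow> 'y \<Rightarrow> real) \<Rightarrow> real \<Rightarrow> 'x \<Rightarrow> 'y pmf" where
  "tilted_pmf target r \<beta> x =
     embed_pmf (\<lambda>y. pmf (target x) y * exp (\<beta> * r x y) /
                     measure_pmf.expectation (target x) (\<lambda>z. exp (\<beta> * r x z)))"

text \<open>Prompt-averaged KL divergence D_KL(pi1 || pi2) = E_{x~rho} KL(pi1(.|x) || pi2(.|x)),
  in nats, via the library KL_divergence (KL_divergence b M N is the divergence of N from M).\<close>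
definition avg_KL :: "'x pmf \<Rightarrow> ('x \<Rightarrow> 'y pmf) \<Rightarrow> ('x \<Rightarrow> 'y pmf) \<Rightarrow> real" where
  "avg_KL \<rho> p1 p2 =
     measure_pmf.expectation \<rho> (\<lambda>x. KL_divergence (exp 1) (measure_pmf (p2 x)) (measure_pmf (p1 x)))"

definition pos_poisson_pmf :: "real \<Rightarrow> nat pmf" where
  "pos_poisson_pmf n = cond_pmf (poisson_pmf n) {0<..}"

end

theory Submission imports Defs begin

lemma pmf_bnd_integrable:
  fixes f :: "'a \<Rightarrow> real"
  assumes "\<And>x. x \<in> set_pmf p \<Longrightarrow> \<bar>f x\<bar> \<le> B"
  shows "integrable (measure_pmf p) f"
  by (rule measure_pmf.integrable_const_bound[where B=B]) (auto simp: AE_measure_pmf_iff assms)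

lemma expect_bind_pmf:
  fixes f :: "'b \<Rightarrow> real"
  assumes bnd: "\<And>z. z \<in> set_pmf (bind_pmf p q) \<Longrightarrow> \<bar>f z\<bar> \<le> B"
  shows "measure_pmf.expectation (bind_pmf p q) f =
         measure_pmf.expectation p (\<lambda>x. measure_pmf.expectation (q x) f)"
proof -
  define g where "g z = (if z \<in> set_pmf (bind_pmf p q) then f z else 0)" for z
  obtain z0 where z0: "z0 \<in> set_pmf (bind_pmf p q)" using set_pmf_not_empty[of "bind_pmf p q"] by blast
  have B0: "0 \<le> B" using bnd[OF z0] by linarith
  have gb: "\<bar>g z\<bar> \<le> B" for z using bnd B0 by (auto simp: g_def)
  have "measure_pmf.expectation (bind_pmf p q) f = measure_pmf.expectation (bind_pmf p q) g"
    by (intro integral_cong_AE) (auto simp: AE_measure_pmf_iff g_def)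
  also have "\<dots> = measure_pmf.expectation p (\<lambda>x. measure_pmf.expectation (q x) g)"
    unfolding measure_pmf_bind
    by (rule integral_bind[where K="count_space UNIV" and B=B and B'=1])
       (use gb measurable_measure_pmf[of q] in \<open>auto simp: measure_pmf.finite_measure_axioms
           AE_measure_pmf_iff measure_pmf.emeasure_space_1\<close>)
  also have "\<dots> = measure_pmf.expectation p (\<lambda>x. measure_pmf.expectation (q x) f)"
    by (intro integral_cong_AE) (auto simp: AE_measure_pmf_iff g_def intro!: integral_cong_AE)
  finally show ?thesis .
qed

lemma expect_rep_Suc:
  fixes f :: "'a list \<Rightarrow> real"
  assumes bnd: "\<And>z. z \<in> set_pmf (replicate_pmf (Suc n) p) \<Longrightarrow> \<bar>f z\<bar> \<le> B"
  shows "measure_pmf.expectation (replicate_pmf (Suc n) p) f =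
         measure_pmf.expectation p (\<lambda>x. measure_pmf.expectation (replicate_pmf n p) (\<lambda>xs. f (x#xs)))"
proof -
  have e: "replicate_pmf (Suc n) p = bind_pmf p (\<lambda>x. map_pmf (\<lambda>xs. x#xs) (replicate_pmf n p))"
    by (simp add: map_pmf_def)
  show ?thesis using bnd unfolding e by (subst expect_bind_pmf) auto
qed

lemma lin6:
  fixes fa fb fc fd fe :: "'a \<Rightarrow> real"
  assumes "integrable (measure_pmf p) fa" "integrable (measure_pmf p) fb" "integrable (measure_pmf p) fc"
    "integrable (measure_pmf p) fd" "integrable (measure_pmf p) fe"
  shows "measure_pmf.expectation p (\<lambda>z. a0 + a1 * fa z + a2 * fb z + a3 * fc z + a4 * fd z + a5 * fe z)
    = a0 + a1 * measure_pmf.expectation p fa + a2 * measure_pmf.expectation p fb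
      + a3 * measure_pmf.expectation p fc + a4 * measure_pmf.expectation p fd + a5 * measure_pmf.expectation p fe"
  using assms by (simp add: integral_add integral_mult_right)


definition ind :: "'a \<Rightarrow> 'a \<Rightarrow> real" where "ind y x = (if x = y then 1 else 0)"
definition cntr :: "'a \<Rightarrow> 'a list \<Rightarrow> real" where "cntr y ys = real (count_list ys y)"
definition Tw :: "('a \<Rightarrow> real) \<Rightarrow> 'a list \<Rightarrow> real" where "Tw w ys = sum_list (map w ys)"

lemma cntr_simps[simp]: "cntr y [] = 0" "cntr y (x#xs) = ind y x + cntr y xs"
  by (auto simp: cntr_def ind_def)
lemma Tw_simps[simp]: "Tw w [] = 0" "Tw w (x#xs) = w x + Tw w xs"
  by (auto simp: Tw_def)

lemma cntr_bnd: "0 \<le> cntr y ys \<and> cntr y ys \<le> real (length ys)"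
  by (induction ys) (auto simp: ind_def)

lemma Tw_bnd: "(\<And>z. z \<in> set ys \<Longrightarrow> \<bar>w z\<bar> \<le> M) \<Longrightarrow> \<bar>Tw w ys\<bar> \<le> real (length ys) * M"
proof (induction ys)
  case (Cons a ys)
  then have "\<bar>w a\<bar> \<le> M" "\<bar>Tw w ys\<bar> \<le> real (length ys) * M" by auto
  then show ?case by (simp add: algebra_simps)
qed simp

lemma Tw_lower: "(\<And>z. z \<in> set ys \<Longrightarrow> 1 \<le> w z) \<Longrightarrow> real (length ys) \<le> Tw w ys"
  by (induction ys) (auto intro!: add_mono)

lemma expect_ind: "measure_pmf.expectation p (\<lambda>x. ind y x * g x) = pmf p y * g y"
proof -
  have "(\<lambda>x. ind y x * g x) = (\<lambda>x. g y * indicator {y} x)"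
    by (auto simp: ind_def fun_eq_iff)
  then show ?thesis by (simp add: measure_pmf_single)
qed

lemma expect_ind1: "measure_pmf.expectation p (ind y) = pmf p y"
  using expect_ind[of p y "\<lambda>_. 1"] by simp

lemma rep_support: "ys \<in> set_pmf (replicate_pmf n p) \<Longrightarrow> length ys = n \<and> set ys \<subseteq> set_pmf p"
  by (auto simp: set_replicate_pmf)

lemma bnd_basic:
  assumes "\<And>z. z \<in> set_pmf p \<Longrightarrow> \<bar>w z\<bar> \<le> M" "ys \<in> set_pmf (replicate_pmf n p)"
  shows "\<bar>cntr y ys\<bar> \<le> n" "\<bar>Tw w ys\<bar> \<le> n * M"
    "\<bar>Tw w ys ^ 2\<bar> \<le> (n * M)^2" "\<bar>cntr y ys * Tw w ys\<bar> \<le> n * (n * M)"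
    "\<bar>cntr y ys * Tw w ys ^ 2\<bar> \<le> n * (n * M)^2"
proof -
  have l: "length ys = n" "set ys \<subseteq> set_pmf p" using rep_support[OF assms(2)] by auto
  have c: "\<bar>cntr y ys\<bar> \<le> n" using cntr_bnd[of y ys] l by auto
  have t: "\<bar>Tw w ys\<bar> \<le> n * M" using Tw_bnd[of ys w M] l assms(1) by auto
  have t2: "\<bar>Tw w ys ^ 2\<bar> \<le> (n * M)^2" unfolding power_abs
    by (intro power_mono t) auto
  show "\<bar>cntr y ys\<bar> \<le> n" "\<bar>Tw w ys\<bar> \<le> n * M" "\<bar>Tw w ys ^ 2\<bar> \<le> (n * M)^2" by fact+
  show "\<bar>cntr y ys * Tw w ys\<bar> \<le> n * (n * M)" unfolding abs_mult
    by (intro mult_mono c t) auto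
  show "\<bar>cntr y ys * Tw w ys ^ 2\<bar> \<le> n * (n * M)^2" unfolding abs_mult
    by (intro mult_mono c t2) auto
qed

lemma int_basic:
  assumes "\<And>z. z \<in> set_pmf p \<Longrightarrow> \<bar>w z\<bar> \<le> M"
  shows "integrable (measure_pmf (replicate_pmf n p)) (cntr y)"
    "integrable (measure_pmf (replicate_pmf n p)) (Tw w)"
    "integrable (measure_pmf (replicate_pmf n p)) (\<lambda>ys. Tw w ys ^ 2)"
    "integrable (measure_pmf (replicate_pmf n p)) (\<lambda>ys. cntr y ys * Tw w ys)"
    "integrable (measure_pmf (replicate_pmf n p)) (\<lambda>ys. cntr y ys * Tw w ys ^ 2)"
proof -
  fix n y
  show "integrable (measure_pmf (replicate_pmf n p)) (cntr y)"
    by (rule pmf_bnd_integrable[where B="real n"]) (rule bnd_basic(1)[OF assms])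
  show "integrable (measure_pmf (replicate_pmf n p)) (Tw w)"
    by (rule pmf_bnd_integrable[where B="real n * M"]) (rule bnd_basic(2)[OF assms])
  show "integrable (measure_pmf (replicate_pmf n p)) (\<lambda>ys. Tw w ys ^ 2)"
    by (rule pmf_bnd_integrable[where B="(real n * M)^2"]) (rule bnd_basic(3)[OF assms])
  show "integrable (measure_pmf (replicate_pmf n p)) (\<lambda>ys. cntr y ys * Tw w ys)"
    by (rule pmf_bnd_integrable[where B="real n * (real n * M)"]) (rule bnd_basic(4)[OF assms])
  show "integrable (measure_pmf (replicate_pmf n p)) (\<lambda>ys. cntr y ys * Tw w ys ^ 2)"
    by (rule pmf_bnd_integrable[where B="real n * (real n * M)^2"]) (rule bnd_basic(5)[OF assms])
qed

lemma int_outer: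
  assumes "\<And>z. z \<in> set_pmf p \<Longrightarrow> \<bar>w z\<bar> \<le> M"
  shows "integrable (measure_pmf p) (ind y)" "integrable (measure_pmf p) w"
    "integrable (measure_pmf p) (\<lambda>x. w x ^ 2)" "integrable (measure_pmf p) (\<lambda>x. ind y x * w x)"
    "integrable (measure_pmf p) (\<lambda>x. ind y x * w x ^ 2)"
proof -
  have b: "\<bar>ind y x\<bar> \<le> 1" for x by (auto simp: ind_def)
  have w2: "\<bar>w x ^ 2\<bar> \<le> M ^ 2" if "x \<in> set_pmf p" for x
    unfolding power_abs by (intro power_mono assms that) auto
  show "integrable (measure_pmf p) (ind y)" by (rule pmf_bnd_integrable[where B=1]) (rule b)
  show "integrable (measure_pmf p) w" by (rule pmf_bnd_integrable) (erule assms)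
  show "integrable (measure_pmf p) (\<lambda>x. w x ^ 2)" by (rule pmf_bnd_integrable) (erule w2)
  show "integrable (measure_pmf p) (\<lambda>x. ind y x * w x)"
    by (rule pmf_bnd_integrable[where B="1*M"]) (unfold abs_mult, intro mult_mono b assms, auto)
  show "integrable (measure_pmf p) (\<lambda>x. ind y x * w x ^ 2)"
    by (rule pmf_bnd_integrable[where B="1*M^2"]) (unfold abs_mult, intro mult_mono b w2, auto)
qed


lemma bnd_sup: fixes w :: "'a \<Rightarrow> real" shows "(\<And>z. z \<in> set_pmf p \<Longrightarrow> \<bar>w z\<bar> \<le> M) \<Longrightarrow> 0 \<le> M"
proof -
  assume a: "\<And>z. z \<in> set_pmf p \<Longrightarrow> \<bar>w z\<bar> \<le> M"
  obtain z where "z \<in> set_pmf p" using set_pmf_not_empty[of p] by blast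
  from a[OF this] show ?thesis using abs_ge_zero[of "w z"] by linarith
qed

lemma moments:
  fixes p :: "'a pmf" and y :: 'a and w :: "'a \<Rightarrow> real"
  assumes bw: "\<And>z. z \<in> set_pmf p \<Longrightarrow> \<bar>w z\<bar> \<le> M"
  defines "Z \<equiv> measure_pmf.expectation p w" and "Q \<equiv> measure_pmf.expectation p (\<lambda>x. w x ^ 2)"
    and "py \<equiv> pmf p y"
  shows "measure_pmf.expectation (replicate_pmf n p) (cntr y) = real n * py \<and>
    measure_pmf.expectation (replicate_pmf n p) (Tw w) = real n * Z \<and>
    measure_pmf.expectation (replicate_pmf n p) (\<lambda>ys. Tw w ys ^ 2) = real n * Q + real n * (real n - 1) * Z^2 \<and>
    measure_pmf.expectation (replicate_pmf n p) (\<lambda>ys. cntr y ys * Tw w ys) = real n * py * w y + real n * (real n - 1) * py * Z \<and>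
    measure_pmf.expectation (replicate_pmf n p) (\<lambda>ys. cntr y ys * Tw w ys ^ 2) =
      real n * py * (w y ^ 2 + (real n - 1) * Q + 2 * (real n - 1) * w y * Z + (real n - 1) * (real n - 2) * Z^2)"
proof (induction n)
  case 0
  then show ?case by simp
next
  case (Suc n)
  define A where "A = measure_pmf.expectation (replicate_pmf n p) (cntr y)"
  define B where "B = measure_pmf.expectation (replicate_pmf n p) (Tw w)"
  define D where "D = measure_pmf.expectation (replicate_pmf n p) (\<lambda>ys. Tw w ys ^ 2)"
  define C where "C = measure_pmf.expectation (replicate_pmf n p) (\<lambda>ys. cntr y ys * Tw w ys)"
  define E where "E = measure_pmf.expectation (replicate_pmf n p) (\<lambda>ys. cntr y ys * Tw w ys ^ 2)"
  have IH: "A = real n * py" "B = real n * Z" "D = real n * Q + real n * (real n - 1) * Z^2"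
    "C = real n * py * w y + real n * (real n - 1) * py * Z"
    "E = real n * py * (w y ^ 2 + (real n - 1) * Q + 2 * (real n - 1) * w y * Z + (real n - 1) * (real n - 2) * Z^2)"
    using Suc.IH unfolding A_def B_def C_def D_def E_def by auto
  have inner: "measure_pmf.expectation (replicate_pmf n p) (\<lambda>z. a0 + a1 * cntr y z + a2 * Tw w z + a3 * Tw w z ^ 2
      + a4 * (cntr y z * Tw w z) + a5 * (cntr y z * Tw w z ^ 2)) = a0 + a1 * A + a2 * B + a3 * D + a4 * C + a5 * E"
    for a0 a1 a2 a3 a4 a5
    unfolding A_def B_def C_def D_def E_def
    by (rule lin6[where fd="\<lambda>z. cntr y z * Tw w z" and fe="\<lambda>z. cntr y z * Tw w z ^ 2", simplified])
       (simp_all add: int_basic[OF bw])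
  have outer: "measure_pmf.expectation p (\<lambda>x. b0 + b1 * ind y x + b2 * w x + b3 * w x ^ 2
      + b4 * (ind y x * w x) + b5 * (ind y x * w x ^ 2)) = b0 + b1 * py + b2 * Z + b3 * Q + b4 * (py * w y) + b5 * (py * w y ^ 2)"
    for b0 b1 b2 b3 b4 b5
    unfolding Z_def Q_def py_def
    by (subst lin6[where fd="\<lambda>z. ind y z * w z" and fe="\<lambda>z. ind y z * w z ^ 2", simplified])
       (simp_all add: int_outer[OF bw] expect_ind expect_ind1)
  have M0: "0 \<le> M" by (rule bnd_sup[OF bw])
  have bS: "\<bar>cntr y ys\<bar> \<le> real (Suc n)" "\<bar>Tw w ys\<bar> \<le> real (Suc n) * M"
    "\<bar>Tw w ys ^ 2\<bar> \<le> (real (Suc n) * M)^2" "\<bar>cntr y ys * Tw w ys\<bar> \<le> real (Suc n) * (real (Suc n) * M)"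
    "\<bar>cntr y ys * Tw w ys ^ 2\<bar> \<le> real (Suc n) * (real (Suc n) * M)^2"
    if "ys \<in> set_pmf (replicate_pmf (Suc n) p)" for ys
    using bnd_basic[OF bw that] by auto
  have e1: "measure_pmf.expectation (replicate_pmf (Suc n) p) (cntr y) = real (Suc n) * py"
  proof -
    have "measure_pmf.expectation (replicate_pmf (Suc n) p) (cntr y)
        = measure_pmf.expectation p (\<lambda>x. measure_pmf.expectation (replicate_pmf n p) (\<lambda>xs. cntr y (x#xs)))"
      by (rule expect_rep_Suc) (erule bS)
    also have "\<dots> = measure_pmf.expectation p (\<lambda>x. ind y x + A)"
      using inner[of _ 1 0 0 0 0] by simp
    also have "\<dots> = py + A" using outer[of A 1 0 0 0 0] by (simp add: add.commute)
    finally show ?thesis using IH by (simp add: algebra_simps)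
  qed
  have e2: "measure_pmf.expectation (replicate_pmf (Suc n) p) (Tw w) = real (Suc n) * Z"
  proof -
    have "measure_pmf.expectation (replicate_pmf (Suc n) p) (Tw w)
        = measure_pmf.expectation p (\<lambda>x. measure_pmf.expectation (replicate_pmf n p) (\<lambda>xs. Tw w (x#xs)))"
      by (rule expect_rep_Suc) (erule bS)
    also have "\<dots> = measure_pmf.expectation p (\<lambda>x. w x + B)"
      using inner[of _ 0 1 0 0 0] by simp
    also have "\<dots> = Z + B" using outer[of B 0 1 0 0 0] by (simp add: add.commute)
    finally show ?thesis using IH by (simp add: algebra_simps)
  qed
  have e3: "measure_pmf.expectation (replicate_pmf (Suc n) p) (\<lambda>ys. Tw w ys ^ 2)
      = real (Suc n) * Q + real (Suc n) * (real (Suc n) - 1) * Z^2"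
  proof -
    have "measure_pmf.expectation (replicate_pmf (Suc n) p) (\<lambda>ys. Tw w ys ^ 2)
        = measure_pmf.expectation p (\<lambda>x. measure_pmf.expectation (replicate_pmf n p) (\<lambda>xs. Tw w (x#xs) ^ 2))"
      by (rule expect_rep_Suc) (erule bS)
    also have "\<dots> = measure_pmf.expectation p (\<lambda>x. w x ^ 2 + 2 * w x * B + D)"
    proof -
      have "(\<lambda>xs. Tw w (x#xs) ^ 2) = (\<lambda>z. w x ^ 2 + 0 * cntr y z + (2 * w x) * Tw w z + 1 * Tw w z ^ 2
         + 0 * (cntr y z * Tw w z) + 0 * (cntr y z * Tw w z ^ 2))" for x
        by (simp add: fun_eq_iff power2_eq_square algebra_simps)
      then show ?thesis by (simp only: inner) simp
    qed
    also have "\<dots> = Q + 2 * Z * B + D"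
    proof -
      have "(\<lambda>x. w x ^ 2 + 2 * w x * B + D) = (\<lambda>x. D + 0 * ind y x + (2 * B) * w x + 1 * w x ^ 2
         + 0 * (ind y x * w x) + 0 * (ind y x * w x ^ 2))"
        by (simp add: fun_eq_iff algebra_simps)
      then show ?thesis by (simp only: outer) (simp add: algebra_simps)
    qed
    finally show ?thesis using IH by (simp add: algebra_simps power2_eq_square)
  qed
  have e4: "measure_pmf.expectation (replicate_pmf (Suc n) p) (\<lambda>ys. cntr y ys * Tw w ys)
      = real (Suc n) * py * w y + real (Suc n) * (real (Suc n) - 1) * py * Z"
  proof -
    have "measure_pmf.expectation (replicate_pmf (Suc n) p) (\<lambda>ys. cntr y ys * Tw w ys)
        = measure_pmf.expectation p (\<lambda>x. measure_pmf.expectation (replicate_pmf n p) (\<lambda>xs. cntr y (x#xs) * Tw w (x#xs)))"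
      by (rule expect_rep_Suc) (erule bS)
    also have "\<dots> = measure_pmf.expectation p (\<lambda>x. ind y x * w x + w x * A + ind y x * B + C)"
    proof -
      have "(\<lambda>xs. cntr y (x#xs) * Tw w (x#xs)) = (\<lambda>z. ind y x * w x + w x * cntr y z + ind y x * Tw w z + 0 * Tw w z ^ 2
         + 1 * (cntr y z * Tw w z) + 0 * (cntr y z * Tw w z ^ 2))" for x
        by (simp add: fun_eq_iff algebra_simps)
      then show ?thesis by (simp only: inner) simp
    qed
    also have "\<dots> = py * w y + Z * A + py * B + C"
    proof -
      have "(\<lambda>x. ind y x * w x + w x * A + ind y x * B + C) = (\<lambda>x. C + B * ind y x + A * w x + 0 * w x ^ 2
         + 1 * (ind y x * w x) + 0 * (ind y x * w x ^ 2))"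
        by (simp add: fun_eq_iff algebra_simps)
      then show ?thesis by (simp only: outer) (simp add: algebra_simps)
    qed
    finally show ?thesis using IH by (simp add: algebra_simps)
  qed
  have e5: "measure_pmf.expectation (replicate_pmf (Suc n) p) (\<lambda>ys. cntr y ys * Tw w ys ^ 2)
      = real (Suc n) * py * (w y ^ 2 + (real (Suc n) - 1) * Q + 2 * (real (Suc n) - 1) * w y * Z
          + (real (Suc n) - 1) * (real (Suc n) - 2) * Z^2)"
  proof -
    have "measure_pmf.expectation (replicate_pmf (Suc n) p) (\<lambda>ys. cntr y ys * Tw w ys ^ 2)
        = measure_pmf.expectation p (\<lambda>x. measure_pmf.expectation (replicate_pmf n p) (\<lambda>xs. cntr y (x#xs) * Tw w (x#xs) ^ 2))"
      by (rule expect_rep_Suc) (erule bS)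
    also have "\<dots> = measure_pmf.expectation p (\<lambda>x. ind y x * w x ^ 2 + w x ^ 2 * A + (2 * ind y x * w x) * B
         + ind y x * D + (2 * w x) * C + E)"
    proof -
      have "(\<lambda>xs. cntr y (x#xs) * Tw w (x#xs) ^ 2) = (\<lambda>z. ind y x * w x ^ 2 + w x ^ 2 * cntr y z
         + (2 * ind y x * w x) * Tw w z + ind y x * Tw w z ^ 2
         + (2 * w x) * (cntr y z * Tw w z) + 1 * (cntr y z * Tw w z ^ 2))" for x
        by (simp add: fun_eq_iff power2_eq_square algebra_simps)
      then show ?thesis by (simp only: inner) simp
    qed
    also have "\<dots> = E + D * py + 2 * C * Z + A * Q + 2 * B * (py * w y) + py * w y ^ 2"
    proof -
      have "(\<lambda>x. ind y x * w x ^ 2 + w x ^ 2 * A + (2 * ind y x * w x) * B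
         + ind y x * D + (2 * w x) * C + E) = (\<lambda>x. E + D * ind y x + (2 * C) * w x + A * w x ^ 2
         + (2 * B) * (ind y x * w x) + 1 * (ind y x * w x ^ 2))"
        by (simp add: fun_eq_iff algebra_simps)
      then show ?thesis by (simp only: outer)
    qed
    finally show ?thesis using IH by (simp add: algebra_simps power2_eq_square)
  qed
  show ?case using e1 e2 e3 e4 e5 by blast
qed


lemma sum_filter_pairs:
  "sum_list (map snd (filter (\<lambda>z. fst z = y) (map (\<lambda>z. (z, g z)) ys))) = cntr y ys * g y"
  by (induction ys) (auto simp: ind_def algebra_simps)

lemma sum_list_div: "sum_list (map (\<lambda>z. f z / c) ys) = sum_list (map f ys) / (c::real)"
  by (induction ys) (simp_all add: add_divide_distrib)

locale wset =
  fixes p :: "'a pmf" and w :: "'a \<Rightarrow> real" and M :: real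
  assumes w_nonneg: "0 \<le> w y" and w_le: "w y \<le> M" and w_ge1: "y \<in> set_pmf p \<Longrightarrow> 1 \<le> w y"
begin

definition "Z = measure_pmf.expectation p w"
definition "Q = measure_pmf.expectation p (\<lambda>x. w x ^ 2)"

lemma bw: "\<bar>w z\<bar> \<le> M" using w_nonneg[of z] w_le[of z] by simp

lemma M_ge1: "1 \<le> M"
proof -
  obtain z where "z \<in> set_pmf p" using set_pmf_not_empty[of p] by blast
  then show ?thesis using w_ge1[of z] w_le[of z] by simp
qed

lemma Z_ge1: "1 \<le> Z"
  unfolding Z_def
  by (rule measure_pmf.integral_ge_const) (auto intro!: int_outer(2)[OF bw] simp: AE_measure_pmf_iff w_ge1)

lemma Z_le: "Z \<le> M"
  unfolding Z_def
  by (rule measure_pmf.integral_le_const) (auto intro!: int_outer(2)[OF bw] simp: AE_measure_pmf_iff w_le)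

lemma Q_le: "Q \<le> M * Z"
proof -
  have "Q \<le> measure_pmf.expectation p (\<lambda>x. M * w x)"
    unfolding Q_def
  proof (rule integral_mono)
    show "integrable (measure_pmf p) (\<lambda>x. w x ^ 2)" by (rule int_outer(3)[OF bw])
    show "integrable (measure_pmf p) (\<lambda>x. M * w x)" by (simp add: int_outer(2)[OF bw])
    fix x show "w x ^ 2 \<le> M * w x" using w_nonneg[of x] w_le[of x]
      by (simp add: power2_eq_square mult_right_mono)
  qed
  also have "\<dots> = M * Z" by (simp add: Z_def)
  finally show ?thesis .
qed

lemma Q_ge: "Z ^ 2 \<le> Q"
proof -
  have "0 \<le> measure_pmf.expectation p (\<lambda>x. (w x - Z) ^ 2)" by (simp add: integral_nonneg)
  also have "(\<lambda>x. (w x - Z) ^ 2) = (\<lambda>x. Z^2 + 0 * ind undefined x + (- 2 * Z) * w x + 1 * w x ^ 2 + 0 * (ind undefined x * w x) + 0 * (ind undefined x * w x ^ 2))"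
    by (simp add: fun_eq_iff power2_eq_square algebra_simps)
  also have "measure_pmf.expectation p \<dots> = Z^2 - 2 * Z * Z + Q"
    by (subst lin6[where fd="\<lambda>z. ind undefined z * w z" and fe="\<lambda>z. ind undefined z * w z ^ 2", simplified])
       (simp_all add: int_outer[OF bw] Z_def Q_def)
  finally show ?thesis by (simp add: power2_eq_square)
qed

definition "K N y = measure_pmf.expectation (replicate_pmf N p) (\<lambda>ys. cntr y ys / Tw w ys)"

lemma rep_T_bounds:
  assumes "ys \<in> set_pmf (replicate_pmf N p)"
  shows "real N \<le> Tw w ys" "Tw w ys \<le> real N * M" "length ys = N"
  using rep_support[OF assms] Tw_lower[of ys w] Tw_bnd[of ys w M] bw w_ge1 by auto

lemma smc_pmf_form:
  assumes "N \<ge> 1"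
  shows "pmf (bind_pmf (replicate_pmf N p) (\<lambda>ys. pmf_of_list (map (\<lambda>y. (y, w y / sum_list (map w ys))) ys))) y
     = w y * K N y"
proof -
  have "pmf (bind_pmf (replicate_pmf N p) (\<lambda>ys. pmf_of_list (map (\<lambda>y. (y, w y / sum_list (map w ys))) ys))) y
     = measure_pmf.expectation (replicate_pmf N p) (\<lambda>ys. w y * (cntr y ys / Tw w ys))"
    unfolding pmf_bind
  proof (intro integral_cong_AE AE_pmfI)
    fix ys assume ys: "ys \<in> set_pmf (replicate_pmf N p)"
    have T: "Tw w ys \<ge> 1" using rep_T_bounds(1)[OF ys] assms by simp
    have wf: "pmf_of_list_wf (map (\<lambda>y. (y, w y / sum_list (map w ys))) ys)"
      using T by (intro pmf_of_list_wfI) (auto simp: w_nonneg sum_list_div Tw_def o_def)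
    show "pmf (pmf_of_list (map (\<lambda>y. (y, w y / sum_list (map w ys))) ys)) y = w y * (cntr y ys / Tw w ys)"
      by (simp add: pmf_pmf_of_list[OF wf] sum_filter_pairs Tw_def)
  qed auto
  also have "\<dots> = w y * K N y" unfolding K_def by (rule integral_mult_right_zero)
  finally show ?thesis .
qed


lemma K_facts:
  assumes y: "y \<in> set_pmf p" and N: "N \<ge> 1"
  shows "\<bar>Z * K N y - pmf p y\<bar> \<le> pmf p y * (2 * M / real N + M^2 / (real N)^2)"
    "0 \<le> K N y" "K N y \<le> pmf p y"
proof -
  define n where "n = real N"
  define py where "py = pmf p y"
  define wy where "wy = w y"
  define a where "a = n * Z"
  have n1: "n \<ge> 1" using N by (simp add: n_def)
  have Z1: "Z \<ge> 1" by (rule Z_ge1)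
  have ZM: "Z \<le> M" by (rule Z_le)
  have a0: "a > 0" using n1 Z1 by (simp add: a_def)
  have py0: "py \<ge> 0" by (simp add: py_def)
  have wy0: "0 \<le> wy" "wy \<le> M" using w_nonneg w_le by (auto simp: wy_def)
  have mom: "measure_pmf.expectation (replicate_pmf N p) (cntr y) = n * py"
     "measure_pmf.expectation (replicate_pmf N p) (\<lambda>ys. cntr y ys * Tw w ys) = n * py * wy + n * (n - 1) * py * Z"
     "measure_pmf.expectation (replicate_pmf N p) (\<lambda>ys. cntr y ys * Tw w ys ^ 2) =
      n * py * (wy ^ 2 + (n - 1) * Q + 2 * (n - 1) * wy * Z + (n - 1) * (n - 2) * Z^2)"
    using moments[OF bw, where n=N and y=y] by (auto simp: n_def py_def wy_def Z_def Q_def)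
  note ib = int_basic(1)[where n=N and y=y, OF bw] int_basic(2,3)[where n=N, OF bw] int_basic(4,5)[where n=N and y=y, OF bw]
  define g where "g ys = cntr y ys * (Tw w ys - a)^2 / Tw w ys" for ys
  define h where "h ys = (cntr y ys * Tw w ys ^ 2 - 2 * a * (cntr y ys * Tw w ys) + a^2 * cntr y ys) / n" for ys
  have ih: "integrable (measure_pmf (replicate_pmf N p)) h" unfolding h_def using ib by simp
  have gh: "0 \<le> g ys \<and> g ys \<le> h ys" if ys: "ys \<in> set_pmf (replicate_pmf N p)" for ys
  proof -
    have T: "n \<le> Tw w ys" using rep_T_bounds(1)[OF ys] by (simp add: n_def)
    have c0: "0 \<le> cntr y ys" using cntr_bnd[of y ys] by simp
    have num: "0 \<le> cntr y ys * (Tw w ys - a)^2" using c0 by simp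
    have "g ys \<le> cntr y ys * (Tw w ys - a)^2 / n"
      unfolding g_def using num T n1 by (intro divide_left_mono) auto
    also have "\<dots> = h ys" unfolding h_def by (simp add: power2_eq_square algebra_simps)
    finally show ?thesis using num T n1 by (simp add: g_def)
  qed
  have ig: "integrable (measure_pmf (replicate_pmf N p)) g"
    by (rule Bochner_Integration.integrable_bound[OF ih]) (auto simp: AE_measure_pmf_iff dest!: gh)
  define X where "X = measure_pmf.expectation (replicate_pmf N p) g"
  have X0: "0 \<le> X" unfolding X_def by (intro integral_nonneg_AE) (auto simp: AE_measure_pmf_iff dest!: gh)
  have Xh: "X \<le> measure_pmf.expectation (replicate_pmf N p) h" unfolding X_def
    by (intro integral_mono_AE ig ih) (auto simp: AE_measure_pmf_iff dest!: gh)
  have Eh: "measure_pmf.expectation (replicate_pmf N p) h = py * ((wy - Z)^2 + (n - 1) * (Q - Z^2))"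
  proof -
    have "measure_pmf.expectation (replicate_pmf N p) h =
      (measure_pmf.expectation (replicate_pmf N p) (\<lambda>ys. cntr y ys * Tw w ys ^ 2)
       - 2 * a * measure_pmf.expectation (replicate_pmf N p) (\<lambda>ys. cntr y ys * Tw w ys)
       + a^2 * measure_pmf.expectation (replicate_pmf N p) (cntr y)) / n"
      unfolding h_def using ib by simp
    also have "\<dots> = py * ((wy - Z)^2 + (n - 1) * (Q - Z^2))"
      unfolding mom a_def using n1 by (simp add: field_simps power2_eq_square) 
    finally show ?thesis .
  qed
  have KX: "K N y = (2 / a) * (n * py) - (1 / a^2) * (n * py * wy + n * (n - 1) * py * Z) + (1 / a^2) * X"
  proof -
    have "K N y = measure_pmf.expectation (replicate_pmf N p)
        (\<lambda>ys. (2 / a) * cntr y ys + (- 1 / a^2) * (cntr y ys * Tw w ys) + (1 / a^2) * g ys)"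
      unfolding K_def
    proof (intro integral_cong_AE AE_pmfI)
      fix ys assume ys: "ys \<in> set_pmf (replicate_pmf N p)"
      have T: "Tw w ys > 0" using rep_T_bounds(1)[OF ys] n1 by (simp add: n_def)
      show "cntr y ys / Tw w ys = (2 / a) * cntr y ys + (- 1 / a^2) * (cntr y ys * Tw w ys) + (1 / a^2) * g ys"
        using T a0 unfolding g_def by (simp add: field_simps power2_eq_square)
    qed auto
    also have "\<dots> = (2 / a) * (n * py) - (1 / a^2) * (n * py * wy + n * (n - 1) * py * Z) + (1 / a^2) * X"
      using ib ig by (simp add: mom X_def)
    finally show ?thesis .
  qed
  have diff: "Z * K N y - py = py * (Z - wy) / (n * Z) + X / (n^2 * Z)"
    unfolding KX a_def using n1 Z1 by (simp add: field_simps power2_eq_square)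
  have t1: "\<bar>py * (Z - wy) / (n * Z)\<bar> \<le> py * (M / n)"
  proof -
    have "\<bar>Z - wy\<bar> \<le> M" using Z1 ZM wy0 by linarith
    have "\<bar>py * (Z - wy) / (n * Z)\<bar> = py * (\<bar>Z - wy\<bar> / (n * Z))"
      using py0 n1 Z1 by (simp add: abs_mult)
    also have "\<bar>Z - wy\<bar> / (n * Z) \<le> M / n"
    proof -
      have "\<bar>Z - wy\<bar> / (n * Z) \<le> M / (n * Z)" using \<open>\<bar>Z - wy\<bar> \<le> M\<close> n1 Z1 by (intro divide_right_mono) auto
      also have "\<dots> \<le> M / n" using n1 Z1 M_ge1 by (intro divide_left_mono) (auto simp: mult_le_cancel_left1)
      finally show ?thesis .
    qed
    then have "py * (\<bar>Z - wy\<bar> / (n * Z)) \<le> py * (M / n)" using py0 by (rule mult_left_mono)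
    finally show ?thesis .
  qed
  have t2: "X / (n^2 * Z) \<le> py * (M^2 / n^2 + M / n)"
  proof -
    have V0: "0 \<le> Q - Z^2" using Q_ge by simp
    have VQ: "Q - Z^2 \<le> M * Z" using Q_le Z1 by (simp add: power2_eq_square) (smt (verit) mult_nonneg_nonneg)
    have sq: "(wy - Z)^2 \<le> M^2" using Z1 ZM wy0
      by (metis abs_le_square_iff abs_of_nonneg diff_ge_0_iff_ge dual_order.trans
          linorder_linear abs_minus_commute M_ge1 abs_of_nonpos diff_le_0_iff_le zero_le_one
          order.trans[of _ Z M] abs_diff_le_iff diff_le_eq add_le_cancel_left) 
    have "X / (n^2 * Z) \<le> py * ((wy - Z)^2 + (n - 1) * (Q - Z^2)) / (n^2 * Z)"
      using Xh Eh n1 Z1 by (intro divide_right_mono) auto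
    also have "\<dots> = py * ((wy - Z)^2 / (n^2 * Z) + (n - 1) * (Q - Z^2) / (n^2 * Z))"
      using n1 Z1 by (simp add: field_simps)
    also have "(wy - Z)^2 / (n^2 * Z) \<le> M^2 / n^2"
    proof -
      have "(wy - Z)^2 / (n^2 * Z) \<le> M^2 / (n^2 * Z)" using sq n1 Z1 by (intro divide_right_mono) auto
      also have "\<dots> \<le> M^2 / n^2" using n1 Z1 by (intro divide_left_mono) (auto simp: mult_le_cancel_left1)
      finally show ?thesis .
    qed
    also have "(n - 1) * (Q - Z^2) / (n^2 * Z) \<le> M / n"
    proof -
      have "(n - 1) * (Q - Z^2) \<le> n * (M * Z)" using n1 V0 VQ by (intro mult_mono) auto
      then have "(n - 1) * (Q - Z^2) / (n^2 * Z) \<le> n * (M * Z) / (n^2 * Z)" using n1 Z1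
        by (intro divide_right_mono) auto
      also have "\<dots> = M / n" using n1 Z1 by (simp add: field_simps power2_eq_square)
      finally show ?thesis .
    qed
    finally show ?thesis using py0 by (simp add: mult_left_mono add_mono)
  qed
  have "\<bar>Z * K N y - py\<bar> \<le> py * (M / n) + py * (M^2 / n^2 + M / n)"
    unfolding diff using t1 t2 X0 n1 Z1 by (smt (verit) divide_nonneg_pos mult_pos_pos zero_less_power)
  then show "\<bar>Z * K N y - pmf p y\<bar> \<le> pmf p y * (2 * M / real N + M^2 / (real N)^2)"
    by (simp add: py_def n_def algebra_simps)
  have cT: "\<bar>cntr y ys / Tw w ys\<bar> \<le> \<bar>cntr y ys\<bar>" "0 \<le> cntr y ys / Tw w ys"
    "cntr y ys / Tw w ys \<le> cntr y ys / n"
    if ys: "ys \<in> set_pmf (replicate_pmf N p)" for ys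
  proof -
    have T: "n \<le> Tw w ys" using rep_T_bounds(1)[OF ys] by (simp add: n_def)
    have c0: "0 \<le> cntr y ys" using cntr_bnd[of y ys] by simp
    show "0 \<le> cntr y ys / Tw w ys" using T n1 c0 by simp
    show "cntr y ys / Tw w ys \<le> cntr y ys / n" using T n1 c0 by (intro divide_left_mono) auto
    have "cntr y ys / Tw w ys \<le> cntr y ys / 1" using T n1 c0 by (intro divide_left_mono) auto
    then show "\<bar>cntr y ys / Tw w ys\<bar> \<le> \<bar>cntr y ys\<bar>" using T n1 c0 by simp
  qed
  have icT: "integrable (measure_pmf (replicate_pmf N p)) (\<lambda>ys. cntr y ys / Tw w ys)"
    by (rule Bochner_Integration.integrable_bound[OF ib(1)]) (auto simp: AE_measure_pmf_iff dest!: cT(1))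
  show "0 \<le> K N y" unfolding K_def
    by (intro integral_nonneg_AE) (auto simp: AE_measure_pmf_iff dest!: cT(2))
  have "K N y \<le> measure_pmf.expectation (replicate_pmf N p) (\<lambda>ys. cntr y ys / n)" unfolding K_def
    by (intro integral_mono_AE icT) (auto simp: AE_measure_pmf_iff ib dest!: cT(3))
  also have "\<dots> = py" using mom(1) n1 by simp
  finally show "K N y \<le> pmf p y" by (simp add: py_def)
qed
end


lemma KL_pmf_bound:
  fixes p q :: "'a pmf"
  assumes supp: "\<And>y. pmf q y = 0 \<Longrightarrow> pmf p y = 0"
    and bnd: "\<And>y. y \<in> set_pmf q \<Longrightarrow> \<bar>pmf p y / pmf q y - 1\<bar> \<le> B"
    and up: "\<And>y. y \<in> set_pmf q \<Longrightarrow> pmf p y / pmf q y \<le> U" and U1: "1 \<le> U"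
  shows "KL_divergence (exp 1) (measure_pmf q) (measure_pmf p) \<le> B^2"
    "KL_divergence (exp 1) (measure_pmf q) (measure_pmf p) \<le> ln U"
proof -
  define \<rho> where "\<rho> y = pmf p y / pmf q y" for y
  have \<rho>0: "0 \<le> \<rho> y" for y by (simp add: \<rho>_def)
  have pq: "pmf q y * \<rho> y = pmf p y" for y
    using supp[of y] by (cases "pmf q y = 0") (auto simp: \<rho>_def)
  have dens: "density (measure_pmf q) (\<lambda>y. ennreal (\<rho> y)) = measure_pmf p"
  proof -
    have "density (measure_pmf q) (\<lambda>y. ennreal (\<rho> y))
        = density (count_space UNIV) (\<lambda>y. ennreal (pmf q y) * ennreal (\<rho> y))"
      unfolding measure_pmf_eq_density by (subst density_density_eq) auto
    also have "(\<lambda>y. ennreal (pmf q y) * ennreal (\<rho> y)) = (\<lambda>y. ennreal (pmf p y))"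
      using pq \<rho>0 by (auto simp: ennreal_mult[symmetric] fun_eq_iff)
    finally show ?thesis by (simp add: measure_pmf_eq_density[of p])
  qed
  have KL: "KL_divergence (exp 1) (measure_pmf q) (measure_pmf p) = measure_pmf.expectation q (\<lambda>y. \<rho> y * ln (\<rho> y))"
    unfolding dens[symmetric]
    by (subst sigma_finite_measure.KL_density[OF prob_space_imp_sigma_finite[OF prob_space_measure_pmf]]) (auto simp: \<rho>0 log_def)
  have int1: "measure_pmf.expectation q \<rho> = 1"
  proof -
    have "measure_pmf.expectation p (\<lambda>_. 1::real) = 1" by simp
    also have "measure_pmf.expectation p (\<lambda>_. 1::real) = measure_pmf.expectation q (\<lambda>y. \<rho> y * 1)"
      unfolding dens[symmetric] by (subst integral_density) (auto simp: \<rho>0)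
    finally show ?thesis by simp
  qed
  have B0: "0 \<le> B"
  proof -
    obtain y where "y \<in> set_pmf q" using set_pmf_not_empty[of q] by blast
    from bnd[OF this] show ?thesis by linarith
  qed
  have \<rho>b: "\<bar>\<rho> y\<bar> \<le> 1 + B" if "y \<in> set_pmf q" for y
    using bnd[OF that] \<rho>0[of y] by (simp add: \<rho>_def)
  have i\<rho>: "integrable (measure_pmf q) \<rho>" by (rule pmf_bnd_integrable) (erule \<rho>b)
  have i\<rho>2: "integrable (measure_pmf q) (\<lambda>y. (\<rho> y - 1)^2)"
  proof (rule pmf_bnd_integrable[where B="B^2"])
    fix y assume "y \<in> set_pmf q"
    then have "\<bar>\<rho> y - 1\<bar> \<le> B" using bnd by (simp add: \<rho>_def)
    then show "\<bar>(\<rho> y - 1)^2\<bar> \<le> B^2" using power_mono[of "\<bar>\<rho> y - 1\<bar>" B 2] by simp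
  qed
  have pt: "\<rho> y * ln (\<rho> y) \<le> (\<rho> y - 1)^2 + (\<rho> y - 1)" for y
  proof (cases "\<rho> y = 0")
    case True then show ?thesis by simp
  next
    case False
    then have "\<rho> y > 0" using \<rho>0[of y] by simp
    then have "\<rho> y * ln (\<rho> y) \<le> \<rho> y * (\<rho> y - 1)" using ln_le_minus_one by (intro mult_left_mono) auto
    then show ?thesis by (simp add: power2_eq_square algebra_simps)
  qed
  show "KL_divergence (exp 1) (measure_pmf q) (measure_pmf p) \<le> B^2"
  proof (cases "integrable (measure_pmf q) (\<lambda>y. \<rho> y * ln (\<rho> y))")
    case True
    have "measure_pmf.expectation q (\<lambda>y. \<rho> y * ln (\<rho> y))
        \<le> measure_pmf.expectation q (\<lambda>y. (\<rho> y - 1)^2 + (\<rho> y - 1))"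
      using True i\<rho> i\<rho>2 pt by (intro integral_mono) auto
    also have "\<dots> = measure_pmf.expectation q (\<lambda>y. (\<rho> y - 1)^2)"
      using i\<rho> i\<rho>2 int1 by (simp add: integral_add integral_diff)
    also have "\<dots> \<le> B^2"
    proof (rule measure_pmf.integral_le_const[OF i\<rho>2], rule AE_pmfI)
      fix y assume "y \<in> set_pmf q"
      then have "\<bar>\<rho> y - 1\<bar> \<le> B" using bnd by (simp add: \<rho>_def)
      then show "(\<rho> y - 1)^2 \<le> B^2" using power_mono[of "\<bar>\<rho> y - 1\<bar>" B 2] by simp
    qed
    finally show ?thesis using KL by simp
  next
    case False
    then show ?thesis using KL by (simp add: not_integrable_integral_eq)
  qed
  show "KL_divergence (exp 1) (measure_pmf q) (measure_pmf p) \<le> ln U"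
  proof (cases "integrable (measure_pmf q) (\<lambda>y. \<rho> y * ln (\<rho> y))")
    case True
    have "measure_pmf.expectation q (\<lambda>y. \<rho> y * ln (\<rho> y))
        \<le> measure_pmf.expectation q (\<lambda>y. \<rho> y * ln U)"
    proof (rule integral_mono_AE[OF True], simp add: i\<rho>, rule AE_pmfI)
      fix y assume y: "y \<in> set_pmf q"
      show "\<rho> y * ln (\<rho> y) \<le> \<rho> y * ln U"
      proof (cases "\<rho> y = 0")
        case False
        then have "\<rho> y > 0" using \<rho>0[of y] by simp
        moreover have "\<rho> y \<le> U" using up[OF y] by (simp add: \<rho>_def)
        ultimately show ?thesis by (intro mult_left_mono) auto
      qed simp
    qed
    also have "\<dots> = ln U" using int1 by simp
    finally show ?thesis using KL by simp
  next
    case False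
    then show ?thesis using KL U1 by (simp add: not_integrable_integral_eq)
  qed
qed


lemma final_real_bound:
  fixes M n :: real
  assumes M1: "1 \<le> M" and n1: "1 \<le> n"
    and k1: "K \<le> (2 * M / n + M^2 / n^2)^2" and k2: "K \<le> ln M"
  shows "K \<le> 9 * M^2 * (1 + ln n) / n^2"
proof (cases "M \<le> n")
  case True
  have "M^2 / n^2 \<le> M / n" using True M1 n1 by (simp add: power2_eq_square field_simps mult_mono)
  then have "2 * M / n + M^2 / n^2 \<le> 3 * (M / n)" by simp
  moreover have "0 \<le> 2 * M / n + M^2 / n^2" using M1 n1 by simp
  ultimately have "(2 * M / n + M^2 / n^2)^2 \<le> (3 * (M / n))^2" by (rule power_mono)
  also have "\<dots> = 9 * M^2 / n^2" by (simp add: power2_eq_square field_simps)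
  also have "\<dots> \<le> 9 * M^2 * (1 + ln n) / n^2" using n1 M1 by (simp add: divide_right_mono)
  finally show ?thesis using k1 by simp
next
  case False
  define t where "t = M / n"
  have t1: "t > 1" using False n1 by (simp add: t_def)
  have lnM: "ln M = ln t + ln n" using M1 n1 by (simp add: t_def ln_div)
  have "ln t \<le> t - 1" using t1 by (intro ln_le_minus_one) auto
  also have "\<dots> \<le> t^2" using t1 by (simp add: power2_eq_square) (smt (verit) mult_le_cancel_left1)
  finally have a: "ln t \<le> t^2" .
  have b: "ln n \<le> t^2 * ln n" using t1 n1 by (simp add: power2_eq_square) (smt (verit) ln_ge_zero mult_le_cancel_right1 one_le_power)
  have "ln M \<le> t^2 * (1 + ln n)" using a b lnM by (simp add: algebra_simps)
  also have "\<dots> \<le> 9 * t^2 * (1 + ln n)" using n1 by simp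
  also have "\<dots> = 9 * M^2 * (1 + ln n) / n^2" by (simp add: t_def power_divide)
  finally show ?thesis using k2 by simp
qed

lemma KL_smc_bound:
  fixes target :: "'x \<Rightarrow> 'a pmf" and r :: "'x \<Rightarrow> 'a \<Rightarrow> real"
  assumes r: "\<And>y. 0 \<le> r x y \<and> r x y \<le> R" and \<beta>: "\<beta> > 0" and N: "N \<ge> 1"
  shows "KL_divergence (exp 1) (measure_pmf (tilted_pmf target r \<beta> x)) (measure_pmf (smc_pmf target target r \<beta> N x))
     \<le> 9 * exp (\<beta> * R)^2 * (1 + ln (real N)) / (real N)^2"
proof -
  define \<pi> where "\<pi> = target x"
  define w where "w = smc_weight target target r \<beta> x"
  define M where "M = exp (\<beta> * R)"
  define e where "e y = exp (\<beta> * r x y)" for y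
  have wform: "w y = (if pmf \<pi> y = 0 then 0 else e y)" for y
    by (simp add: w_def smc_weight_def \<pi>_def e_def)
  have e1: "1 \<le> e y" for y using r[of y] \<beta> by (simp add: e_def)
  have e0: "0 \<le> e y" for y by (simp add: e_def)
  have eM: "e y \<le> M" for y using r[of y] \<beta> by (simp add: e_def M_def)
  have M0: "0 \<le> M" by (simp add: M_def)
  interpret wset \<pi> w M
    by unfold_locales (use e1 eM M0 in \<open>auto simp: wform set_pmf_eq' order.trans[OF zero_le_one]\<close>)
  have Zpos: "Z > 0" using Z_ge1 by simp
  have Ze: "measure_pmf.expectation \<pi> e = Z"
    unfolding Z_def by (intro integral_cong_AE) (auto simp: AE_measure_pmf_iff wform set_pmf_eq)
  have ie: "integrable (measure_pmf \<pi>) e"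
    by (rule pmf_bnd_integrable[where B=M]) (use e1 eM in \<open>auto simp: abs_of_nonneg order.trans[OF zero_le_one]\<close>)
  have tilt: "pmf (tilted_pmf target r \<beta> x) y = pmf \<pi> y * w y / Z" for y
  proof -
    have nn: "(\<integral>\<^sup>+y. ennreal (pmf \<pi> y * e y / Z) \<partial>count_space UNIV) = 1"
    proof -
      have "(\<integral>\<^sup>+y. ennreal (pmf \<pi> y * e y / Z) \<partial>count_space UNIV)
          = (\<integral>\<^sup>+y. ennreal (pmf \<pi> y) * ennreal (e y / Z) \<partial>count_space UNIV)"
        using Zpos e1 by (intro nn_integral_cong) (auto simp: ennreal_mult[symmetric] order.trans[OF zero_le_one])
      also have "\<dots> = (\<integral>\<^sup>+y. ennreal (e y / Z) \<partial>measure_pmf \<pi>)"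
        by (simp add: nn_integral_measure_pmf)
      also have "\<dots> = ennreal (measure_pmf.expectation \<pi> (\<lambda>y. e y / Z))"
        using ie Zpos e0 by (intro nn_integral_eq_integral) (auto intro!: AE_I2)
      also have "measure_pmf.expectation \<pi> (\<lambda>y. e y / Z) = 1" using Ze Zpos by simp
      finally show ?thesis by simp
    qed
    have "pmf (tilted_pmf target r \<beta> x) y = pmf \<pi> y * e y / Z"
      unfolding tilted_pmf_def \<pi>_def[symmetric] e_def[symmetric] Ze
      by (rule pmf_embed_pmf) (use nn Zpos e0 in \<open>auto intro!: divide_nonneg_pos\<close>)
    then show ?thesis by (simp add: wform)
  qed
  have smc: "pmf (smc_pmf target target r \<beta> N x) y = w y * K N y" for y
    unfolding smc_pmf_def \<pi>_def[symmetric] w_def[symmetric] by (rule smc_pmf_form[OF N])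
  define B where "B = 2 * M / real N + M^2 / (real N)^2"
  have kl: "KL_divergence (exp 1) (measure_pmf (tilted_pmf target r \<beta> x)) (measure_pmf (smc_pmf target target r \<beta> N x)) \<le> B^2
     \<and> KL_divergence (exp 1) (measure_pmf (tilted_pmf target r \<beta> x)) (measure_pmf (smc_pmf target target r \<beta> N x)) \<le> ln M"
  proof -
    have h1: "pmf (smc_pmf target target r \<beta> N x) y = 0" if "pmf (tilted_pmf target r \<beta> x) y = 0" for y
    proof -
      have "w y = 0" using that Zpos by (auto simp: tilt wform)
      then show ?thesis by (simp add: smc)
    qed
    have h23: "\<bar>pmf (smc_pmf target target r \<beta> N x) y / pmf (tilted_pmf target r \<beta> x) y - 1\<bar> \<le> B \<and>
       pmf (smc_pmf target target r \<beta> N x) y / pmf (tilted_pmf target r \<beta> x) y \<le> M"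
      if "y \<in> set_pmf (tilted_pmf target r \<beta> x)" for y
    proof -
      have y: "y \<in> set_pmf \<pi>" using that by (auto simp: set_pmf_eq tilt)
      have py: "pmf \<pi> y > 0" using y by (simp add: pmf_positive)
      have wy: "w y \<ge> 1" using w_ge1[OF y] .
      have ratio: "pmf (smc_pmf target target r \<beta> N x) y / pmf (tilted_pmf target r \<beta> x) y = Z * K N y / pmf \<pi> y"
        using py wy Zpos by (simp add: smc tilt field_simps)
      have "\<bar>Z * K N y / pmf \<pi> y - 1\<bar> = \<bar>Z * K N y - pmf \<pi> y\<bar> / pmf \<pi> y"
        using py by (simp add: field_simps)
      also have "\<dots> \<le> B" using K_facts(1)[OF y N] py by (simp add: B_def divide_le_eq mult.commute)
      finally have 1: "\<bar>pmf (smc_pmf target target r \<beta> N x) y / pmf (tilted_pmf target r \<beta> x) y - 1\<bar> \<le> B"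
        by (simp add: ratio)
      have "Z * K N y \<le> M * pmf \<pi> y"
        using K_facts(2,3)[OF y N] Z_le Zpos by (intro mult_mono) auto
      then have 2: "pmf (smc_pmf target target r \<beta> N x) y / pmf (tilted_pmf target r \<beta> x) y \<le> M"
        using py by (simp add: ratio divide_le_eq)
      show ?thesis using 1 2 by simp
    qed
    show ?thesis using KL_pmf_bound[OF h1, where B=B and U=M] h23 M_ge1 by blast
  qed
  show ?thesis
    using final_real_bound[OF M_ge1, of "real N"] kl N by (simp add: B_def M_def)
qed


lemma expect_le_const_pmf:
  fixes f :: "'a \<Rightarrow> real"
  assumes "\<And>x. x \<in> set_pmf p \<Longrightarrow> f x \<le> c" "0 \<le> c"
  shows "measure_pmf.expectation p f \<le> c"
proof (cases "integrable (measure_pmf p) f")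
  case True
  then show ?thesis by (rule measure_pmf.integral_le_const) (auto simp: AE_measure_pmf_iff assms)
qed (simp add: not_integrable_integral_eq assms)

lemma expect_le_fun_pmf:
  fixes f g :: "'a \<Rightarrow> real"
  assumes "\<And>x. x \<in> set_pmf p \<Longrightarrow> f x \<le> g x" "\<And>x. 0 \<le> g x" "integrable (measure_pmf p) g"
  shows "measure_pmf.expectation p f \<le> measure_pmf.expectation p g"
proof (cases "integrable (measure_pmf p) f")
  case True
  then show ?thesis by (intro integral_mono_AE assms) (auto simp: AE_measure_pmf_iff assms)
qed (simp add: not_integrable_integral_eq assms integral_nonneg)

lemma expect_nat_le_sums:
  fixes P :: "nat pmf" and G h :: "nat \<Rightarrow> real"
  assumes G0: "\<And>k. 0 \<le> G k" and le: "\<And>k. pmf P k * G k \<le> h k" and hs: "h sums S"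
  shows "measure_pmf.expectation P G \<le> S"
proof -
  have sg: "summable (\<lambda>k. pmf P k * G k)"
    by (rule summable_comparison_test[OF _ sums_summable[OF hs]]) (use le G0 in auto)
  have ic: "integrable (count_space UNIV) (\<lambda>k. pmf P k * G k)"
    unfolding integrable_count_space_nat_iff using sg G0 by simp
  have "measure_pmf.expectation P G = integral\<^sup>L (count_space UNIV) (\<lambda>k. pmf P k * G k)"
    unfolding measure_pmf_eq_density by (subst integral_density) auto
  also have "\<dots> = (\<Sum>k. pmf P k * G k)" by (rule integral_count_space_nat[OF ic])
  also have "\<dots> \<le> suminf h" by (rule suminf_le[OF le sg sums_summable[OF hs]])
  also have "\<dots> = S" using hs by (simp add: sums_iff)
  finally show ?thesis .
qed

lemma exp_shift_sums:
  fixes \<mu> :: real assumes \<mu>: "\<mu> > 0"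
  shows "(\<lambda>k. \<mu> ^ k / fact k * exp (- \<mu>) / (real k + 1)) sums (exp (- \<mu>) * (exp \<mu> - 1) / \<mu>)"
    "(\<lambda>k. \<mu> ^ k / fact k * exp (- \<mu>) / ((real k + 1) * (real k + 2))) sums (exp (- \<mu>) * (exp \<mu> - 1 - \<mu>) / \<mu>^2)"
proof -
  have e0: "(\<lambda>k. \<mu> ^ k / fact k) sums exp \<mu>" using exp_converges[of \<mu>] by (simp add: divide_inverse mult.commute)
  have e1: "(\<lambda>k. \<mu> ^ Suc k / fact (Suc k)) sums (exp \<mu> - 1)"
    using e0 sums_Suc_iff[of "\<lambda>k. \<mu> ^ k / fact k" "exp \<mu> - 1"] by simp
  have e2: "(\<lambda>k. \<mu> ^ Suc (Suc k) / fact (Suc (Suc k))) sums (exp \<mu> - 1 - \<mu>)"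
    using e1 sums_Suc_iff[of "\<lambda>k. \<mu> ^ Suc k / fact (Suc k)" "exp \<mu> - 1 - \<mu>"] by simp
  have "(\<lambda>k. exp (- \<mu>) / \<mu> * (\<mu> ^ Suc k / fact (Suc k))) sums (exp (- \<mu>) / \<mu> * (exp \<mu> - 1))"
    by (rule sums_mult[OF e1])
  moreover have "(\<lambda>k. exp (- \<mu>) / \<mu> * (\<mu> ^ Suc k / fact (Suc k))) = (\<lambda>k. \<mu> ^ k / fact k * exp (- \<mu>) / (real k + 1))"
    using \<mu> by (auto simp: fun_eq_iff field_simps)
  ultimately show "(\<lambda>k. \<mu> ^ k / fact k * exp (- \<mu>) / (real k + 1)) sums (exp (- \<mu>) * (exp \<mu> - 1) / \<mu>)"
    by simp
  have "(\<lambda>k. exp (- \<mu>) / \<mu>^2 * (\<mu> ^ Suc (Suc k) / fact (Suc (Suc k)))) sums (exp (- \<mu>) / \<mu>^2 * (exp \<mu> - 1 - \<mu>))"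
    by (rule sums_mult[OF e2])
  moreover have "(\<lambda>k. exp (- \<mu>) / \<mu>^2 * (\<mu> ^ Suc (Suc k) / fact (Suc (Suc k)))) = (\<lambda>k. \<mu> ^ k / fact k * exp (- \<mu>) / ((real k + 1) * (real k + 2)))"
    using \<mu> by (auto simp: fun_eq_iff field_simps power2_eq_square)
  ultimately show "(\<lambda>k. \<mu> ^ k / fact k * exp (- \<mu>) / ((real k + 1) * (real k + 2))) sums (exp (- \<mu>) * (exp \<mu> - 1 - \<mu>) / \<mu>^2)"
    by simp
qed


lemma poisson_cond_bound:
  fixes \<mu> a b :: real
  assumes \<mu>: "\<mu> \<ge> 3" and a: "a \<ge> 0" and b: "b \<ge> 0"
  shows "measure_pmf.expectation (pos_poisson_pmf \<mu>) (\<lambda>k. a / ((real k + 1) * (real k + 2)) + b / (real k + 1))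
     \<le> 2 * (a / \<mu>^2 + b / \<mu>)"
proof -
  have \<mu>0: "\<mu> > 0" using \<mu> by simp
  define Poi where "Poi = poisson_pmf \<mu>"
  have ne: "set_pmf Poi \<inter> {0<..} \<noteq> {}" using \<mu>0 by (auto simp: Poi_def)
  define Pr where "Pr = measure_pmf.prob Poi {0<..}"
  have "{0::nat<..} = UNIV - {0}" by auto
  then have Pr_eq: "Pr = 1 - exp (- \<mu>)"
    unfolding Pr_def using measure_pmf.prob_compl[of "{0::nat}" Poi] \<mu>0
    by (simp add: measure_pmf_single Poi_def)
  have "exp \<mu> \<ge> 2" using exp_ge_add_one_self[of \<mu>] \<mu> by linarith
  then have "exp (- \<mu>) \<le> 1 / 2" by (simp add: exp_minus field_simps)
  then have Pr2: "Pr \<ge> 1 / 2" using Pr_eq by simp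
  define G where "G k = a / ((real k + 1) * (real k + 2)) + b / (real k + 1)" for k :: nat
  define t1 where "t1 k = \<mu> ^ k / fact k * exp (- \<mu>) / (real k + 1)" for k :: nat
  define t2 where "t2 k = \<mu> ^ k / fact k * exp (- \<mu>) / ((real k + 1) * (real k + 2))" for k :: nat
  define S1 where "S1 = exp (- \<mu>) * (exp \<mu> - 1) / \<mu>"
  define S2 where "S2 = exp (- \<mu>) * (exp \<mu> - 1 - \<mu>) / \<mu>^2"
  have s1: "t1 sums S1" unfolding t1_def S1_def by (rule exp_shift_sums(1)[OF \<mu>0])
  have s2: "t2 sums S2" unfolding t2_def S2_def by (rule exp_shift_sums(2)[OF \<mu>0])
  define h where "h k = (a * t2 k + b * t1 k) / Pr" for k
  have hs: "h sums ((a * S2 + b * S1) / Pr)"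
    unfolding h_def by (intro sums_divide sums_add sums_mult s1 s2)
  have G0: "0 \<le> G k" for k using a b by (simp add: G_def)
  have t0: "0 \<le> t1 k" "0 \<le> t2 k" for k using \<mu>0 by (simp_all add: t1_def t2_def)
  have le: "pmf (pos_poisson_pmf \<mu>) k * G k \<le> h k" for k
  proof (cases "k > 0")
    case True
    have "pmf (pos_poisson_pmf \<mu>) k = pmf Poi k / Pr"
      unfolding pos_poisson_pmf_def Poi_def[symmetric] Pr_def using True by (simp add: pmf_cond[OF ne])
    moreover have "pmf Poi k = \<mu> ^ k / fact k * exp (- \<mu>)" using \<mu>0 by (simp add: Poi_def)
    ultimately have "pmf (pos_poisson_pmf \<mu>) k * G k = h k"
      unfolding h_def G_def t1_def t2_def by (simp add: divide_inverse algebra_simps)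
    then show ?thesis by simp
  next
    case False
    then have "pmf (pos_poisson_pmf \<mu>) k = 0"
      unfolding pos_poisson_pmf_def Poi_def[symmetric] by (simp add: pmf_cond[OF ne])
    then show ?thesis using t0 a b Pr2 by (simp add: h_def)
  qed
  have "measure_pmf.expectation (pos_poisson_pmf \<mu>) G \<le> (a * S2 + b * S1) / Pr"
    by (rule expect_nat_le_sums[OF G0 le hs])
  also have "\<dots> \<le> 2 * (a / \<mu>^2 + b / \<mu>)"
  proof -
    have "S1 = (1 - exp (- \<mu>)) / \<mu>" by (simp add: S1_def algebra_simps exp_minus field_simps)
    then have S1b: "S1 \<le> 1 / \<mu>" using \<mu>0 by (simp add: divide_right_mono)
    have "exp (- \<mu>) * (exp \<mu> - 1 - \<mu>) = 1 - exp (- \<mu>) - \<mu> * exp (- \<mu>)"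
      using exp_minus_inverse[of \<mu>] by (simp add: algebra_simps)
    then have "S2 = (1 - exp (- \<mu>) - \<mu> * exp (- \<mu>)) / \<mu>^2" by (simp add: S2_def)
    moreover have "1 - exp (- \<mu>) - \<mu> * exp (- \<mu>) \<le> 1"
      using \<mu>0 mult_nonneg_nonneg[of \<mu> "exp (- \<mu>)"] exp_gt_zero[of "- \<mu>"] by linarith
    ultimately have S2b: "S2 \<le> 1 / \<mu>^2" using \<mu>0 by (simp add: divide_right_mono)
    have "a * S2 + b * S1 \<le> a / \<mu>^2 + b / \<mu>"
      using mult_left_mono[OF S2b a] mult_left_mono[OF S1b b] by simp
    moreover have "0 \<le> a / \<mu>^2 + b / \<mu>" using a b \<mu>0 by simp
    ultimately have "(a * S2 + b * S1) / Pr \<le> (a / \<mu>^2 + b / \<mu>) / Pr" using Pr2 by (intro divide_right_mono) auto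
    also have "\<dots> \<le> (a / \<mu>^2 + b / \<mu>) / (1/2)"
      using Pr2 \<open>0 \<le> a / \<mu>^2 + b / \<mu>\<close> by (intro divide_left_mono) auto
    also have "\<dots> = 2 * (a / \<mu>^2 + b / \<mu>)" by (simp add: mult.commute)
    finally show ?thesis .
  qed
  finally show ?thesis by (simp only: G_def[abs_def])
qed


lemma F_le_G:
  fixes x \<mu> M :: real
  assumes x: "x \<ge> 1" and \<mu>: "\<mu> \<ge> 1"
  shows "9 * M^2 * (1 + ln x) / x^2 \<le> 54 * M^2 * (1 + ln \<mu>) / ((x + 1) * (x + 2)) + 18 * M^2 / \<mu> / (x + 1)"
proof -
  have "ln x - ln \<mu> = ln (x / \<mu>)" using x \<mu> by (simp add: ln_div)
  also have "\<dots> \<le> x / \<mu> - 1" using x \<mu> by (intro ln_le_minus_one) simp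
  finally have lnx: "ln x \<le> ln \<mu> + x / \<mu>" by simp
  have l0: "0 \<le> 1 + ln \<mu>" using \<mu> by simp
  have "(1 + ln x) / x^2 \<le> (1 + ln \<mu> + x / \<mu>) / x^2" using lnx x by (intro divide_right_mono) auto
  also have "\<dots> = (1 + ln \<mu>) * (1 / x^2) + (1 / \<mu>) * (1 / x)" using x \<mu> by (simp add: field_simps power2_eq_square)
  also have "\<dots> \<le> (1 + ln \<mu>) * (6 / ((x + 1) * (x + 2))) + (1 / \<mu>) * (2 / (x + 1))"
  proof (intro add_mono mult_left_mono l0)
    have xx1: "x \<le> x * x" using x mult_right_mono[of 1 x x] by simp
    have xx: "x \<le> x * x" "1 \<le> x * x" using xx1 x by linarith+
    have "(x + 1) * (x + 2) \<le> 6 * x^2" using xx by (simp add: power2_eq_square algebra_simps)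
    then have "6 / (6 * x^2) \<le> 6 / ((x + 1) * (x + 2))" using x by (intro divide_left_mono) auto
    then show "1 / x^2 \<le> 6 / ((x + 1) * (x + 2))" by simp
    show "1 / x \<le> 2 / (x + 1)" using x by (simp add: field_simps)
  qed (use \<mu> in auto)
  finally have "(1 + ln x) / x^2 \<le> (1 + ln \<mu>) * (6 / ((x + 1) * (x + 2))) + (1 / \<mu>) * (2 / (x + 1))" .
  then have "9 * M^2 * ((1 + ln x) / x^2) \<le> 9 * M^2 * ((1 + ln \<mu>) * (6 / ((x + 1) * (x + 2))) + (1 / \<mu>) * (2 / (x + 1)))"
    by (intro mult_left_mono) auto
  then show ?thesis by (simp add: field_simps)
qed

theorem corollaryB8:
  "\<exists>C > 0. \<exists>k :: nat.
     \<forall>(\<rho> :: nat pmf) (target :: nat \<Rightarrow> nat pmf) (Y :: nat set) (r :: nat \<Rightarrow> nat \<Rightarrow> real)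
       (R :: real) (\<beta> :: real) (n :: nat).
       (\<forall>x. set_pmf (target x) = Y) \<longrightarrow>
       (\<forall>x y. 0 \<le> r x y \<and> r x y \<le> R) \<longrightarrow>
       \<beta> > 0 \<longrightarrow> n \<ge> 3 \<longrightarrow>
       measure_pmf.expectation (pos_poisson_pmf (real n))
          (\<lambda>N. avg_KL \<rho> (smc_pmf target target r \<beta> N) (tilted_pmf target r \<beta>))
         \<le> C * exp (2 * \<beta> * R) * ln (real n) ^ k / (real n) ^ 2
       \<and> avg_KL \<rho> (smc_pmf target target r \<beta> n) (tilted_pmf target r \<beta>)
         \<le> C * exp (2 * \<beta> * R) * ln (real n) ^ k / (real n) powr (3/2)"
proof (rule exI[of _ "252::real"], rule conjI, simp, intro exI[of _ "1::nat"] allI impI conjI)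
  fix \<rho> :: "nat pmf" and target :: "nat \<Rightarrow> nat pmf" and Y :: "nat set" and r :: "nat \<Rightarrow> nat \<Rightarrow> real"
    and R \<beta> :: real and n :: nat
  assume r: "\<forall>x y. 0 \<le> r x y \<and> r x y \<le> R" and \<beta>: "\<beta> > 0" and n3: "n \<ge> 3"
  define M where "M = exp (\<beta> * R)"
  define \<mu> where "\<mu> = real n"
  have \<mu>3: "\<mu> \<ge> 3" using n3 by (simp add: \<mu>_def)
  have R0: "R \<ge> 0" using r by (meson order.trans)
  have M1: "M \<ge> 1" using R0 \<beta> by (simp add: M_def)
  have eM: "exp (2 * \<beta> * R) = M^2" by (simp add: M_def power2_eq_square exp_add[symmetric])
  have ln1: "ln \<mu> \<ge> 1"
  proof -
    have "exp 1 \<le> \<mu>" using exp_le \<mu>3 by linarith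
    then show ?thesis using \<mu>3 by (simp add: ln_ge_iff)
  qed
  have perN: "avg_KL \<rho> (smc_pmf target target r \<beta> N) (tilted_pmf target r \<beta>) \<le> 9 * M^2 * (1 + ln (real N)) / (real N)^2"
    if N: "N \<ge> 1" for N
    unfolding avg_KL_def
  proof (rule expect_le_const_pmf)
    fix x
    show "KL_divergence (exp 1) (measure_pmf (tilted_pmf target r \<beta> x)) (measure_pmf (smc_pmf target target r \<beta> N x))
        \<le> 9 * M^2 * (1 + ln (real N)) / (real N)^2"
      using KL_smc_bound[of r x R \<beta> N target] r \<beta> N by (simp add: M_def)
    show "0 \<le> 9 * M^2 * (1 + ln (real N)) / (real N)^2" using N by simp
  qed
  show "avg_KL \<rho> (smc_pmf target target r \<beta> n) (tilted_pmf target r \<beta>)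
         \<le> 252 * exp (2 * \<beta> * R) * ln (real n) ^ 1 / (real n) powr (3/2)"
  proof -
    have "avg_KL \<rho> (smc_pmf target target r \<beta> n) (tilted_pmf target r \<beta>) \<le> 9 * M^2 * (1 + ln \<mu>) / \<mu>^2"
      using perN[of n] n3 by (simp add: \<mu>_def)
    also have "\<dots> \<le> 252 * M^2 * ln \<mu> / \<mu>^2"
    proof (intro divide_right_mono)
      have "(1 + ln \<mu>) * M^2 \<le> (28 * ln \<mu>) * M^2" using ln1 by (intro mult_right_mono) auto
      then show "9 * M^2 * (1 + ln \<mu>) \<le> 252 * M^2 * ln \<mu>" by (simp add: algebra_simps)
    qed simp
    also have "\<dots> \<le> 252 * M^2 * ln \<mu> / \<mu> powr (3/2)"
    proof (intro divide_left_mono)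
      have "\<mu> powr (3/2) \<le> \<mu> powr 2" using \<mu>3 by (intro powr_mono) auto
      then show "\<mu> powr (3/2) \<le> \<mu>^2" using \<mu>3 by (simp add: powr_numeral)
    qed (use ln1 \<mu>3 in auto)
    finally show ?thesis by (simp add: eM \<mu>_def)
  qed
  show "measure_pmf.expectation (pos_poisson_pmf (real n))
          (\<lambda>N. avg_KL \<rho> (smc_pmf target target r \<beta> N) (tilted_pmf target r \<beta>))
         \<le> 252 * exp (2 * \<beta> * R) * ln (real n) ^ 1 / (real n) ^ 2"
  proof -
    define a where "a = 54 * M^2 * (1 + ln \<mu>)"
    define b where "b = 18 * M^2 / \<mu>"
    define G where "G k = a / ((real k + 1) * (real k + 2)) + b / (real k + 1)" for k :: nat
    have a0: "a \<ge> 0" using ln1 by (simp add: a_def)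
    have b0: "b \<ge> 0" using \<mu>3 by (simp add: b_def)
    have G0: "0 \<le> G k" for k using a0 b0 by (simp add: G_def)
    have Gb: "\<bar>G k\<bar> \<le> a + b" for k
    proof -
      have "1 * 1 \<le> (real k + 1) * (real k + 2)" by (intro mult_mono) auto
      then have "a / ((real k + 1) * (real k + 2)) \<le> a / 1" using a0 by (intro divide_left_mono) auto
      moreover have "b / (real k + 1) \<le> b / 1" using b0 by (intro divide_left_mono) auto
      ultimately show ?thesis using G0[of k] by (simp add: G_def)
    qed
    have ne: "set_pmf (poisson_pmf \<mu>) \<inter> {0<..} \<noteq> {}" using \<mu>3 by auto
    have "measure_pmf.expectation (pos_poisson_pmf (real n))
          (\<lambda>N. avg_KL \<rho> (smc_pmf target target r \<beta> N) (tilted_pmf target r \<beta>))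
        \<le> measure_pmf.expectation (pos_poisson_pmf \<mu>) G"
      unfolding \<mu>_def[symmetric]
    proof (rule expect_le_fun_pmf[OF _ G0])
      show "integrable (measure_pmf (pos_poisson_pmf \<mu>)) G" by (rule pmf_bnd_integrable[where B="a+b"]) (rule Gb)
      fix N assume "N \<in> set_pmf (pos_poisson_pmf \<mu>)"
      then have N: "N \<ge> 1" using set_cond_pmf[OF ne] unfolding pos_poisson_pmf_def by auto
      have "avg_KL \<rho> (smc_pmf target target r \<beta> N) (tilted_pmf target r \<beta>) \<le> 9 * M^2 * (1 + ln (real N)) / (real N)^2"
        by (rule perN[OF N])
      also have "\<dots> \<le> G N" unfolding G_def a_def b_def
        using F_le_G[of "real N" \<mu> M] N \<mu>3 by simp
      finally show "avg_KL \<rho> (smc_pmf target target r \<beta> N) (tilted_pmf target r \<beta>) \<le> G N" .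
    qed
    also have "\<dots> \<le> 2 * (a / \<mu>^2 + b / \<mu>)"
      unfolding G_def[abs_def] using poisson_cond_bound[OF \<mu>3 a0 b0] by simp
    also have "\<dots> = (108 * M^2 * (1 + ln \<mu>) + 36 * M^2) / \<mu>^2"
      using \<mu>3 by (simp add: a_def b_def field_simps power2_eq_square)
    also have "\<dots> \<le> 252 * M^2 * ln \<mu> / \<mu>^2"
    proof (intro divide_right_mono)
      have "M^2 \<le> M^2 * ln \<mu>" using ln1 by (simp add: mult_le_cancel_left1)
      then show "108 * M^2 * (1 + ln \<mu>) + 36 * M^2 \<le> 252 * M^2 * ln \<mu>" by (simp add: algebra_simps)
    qed simp
    finally show ?thesis by (simp add: eM \<mu>_def)
  qed
qed

end
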